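(* For every integer $n>1$ there exists a nonassociative noncommutative C-loop whose nucleus has exactly $n$ elements.
   Context: A C-loop is a loop satisfying $x(y(yz))=((xy)y)z$ for all $x,y,z$. The nucleus of a loop is the set of elements $a$ with $a(yz)=(ay)z$, $y(az)=(ya)z$, $y(za)=(yz)a$ for all $y,z$. *)

theory Defs
  imports Main
begin

definition is_loop :: "'a set \<Rightarrow> ('a \<Rightarrow> 'a \<Rightarrow> 'a) \<Rightarrow> 'a \<Rightarrow> bool" where
  "is_loop L m e \<longleftrightarrow>
     e \<in> L \<and>
     (\<forall>x\<in>L. \<forall>y\<in>L. m x y \<in> L) \<and>
     (\<forall>x\<in>L. m e x = x \<and> m x e = x) \<and>
     (\<forall>a\<in>L. \<forall>b\<in>L. \<exists>!x. x \<in> L \<and> m a x = b) \<and>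
     (\<forall>a\<in>L. \<forall>b\<in>L. \<exists>!y. y \<in> L \<and> m y a = b)"

definition is_C_loop :: "'a set \<Rightarrow> ('a \<Rightarrow> 'a \<Rightarrow> 'a) \<Rightarrow> 'a \<Rightarrow> bool" where
  "is_C_loop L m e \<longleftrightarrow> is_loop L m e \<and>
     (\<forall>x\<in>L. \<forall>y\<in>L. \<forall>z\<in>L. m x (m y (m y z)) = m (m (m x y) y) z)"

definition nucleus :: "'a set \<Rightarrow> ('a \<Rightarrow> 'a \<Rightarrow> 'a) \<Rightarrow> 'a set" where
  "nucleus L m = {a \<in> L. \<forall>y\<in>L. \<forall>z\<in>L.
      m a (m y z) = m (m a y) z \<and> m y (m a z) = m (m y a) z \<and> m y (m z a) = m (m y z) a}"

definition associative_on :: "'a set \<Rightarrow> ('a \<Rightarrow> 'a \<Rightarrow> 'a) \<Rightarrow> bool" where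
  "associative_on L m \<longleftrightarrow> (\<forall>x\<in>L. \<forall>y\<in>L. \<forall>z\<in>L. m x (m y z) = m (m x y) z)"

definition commutative_on :: "'a set \<Rightarrow> ('a \<Rightarrow> 'a \<Rightarrow> 'a) \<Rightarrow> bool" where
  "commutative_on L m \<longleftrightarrow> (\<forall>x\<in>L. \<forall>y\<in>L. m x y = m y x)"

end

theory Submission
  imports Defs
begin

definition sm :: "nat \<Rightarrow> nat \<Rightarrow> nat" where
  "sm s t = (if s = 0 then t else if t = 0 then s else if s = t then 0 else
     1 + 3 * ((6 - (s - 1) div 3 - (t - 1) div 3) mod 3) + (6 - (s - 1) mod 3 - (t - 1) mod 3) mod 3)"

definition ff :: "nat \<Rightarrow> nat \<Rightarrow> nat" where
  "ff s t = (if s = 0 \<or> t = 0 then 0 else if s = t then 1 else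
     (if ((t - 1) div 3 + 3 - (s - 1) div 3) mod 3 = 1 \<or>
         (((t - 1) div 3 + 3 - (s - 1) div 3) mod 3 = 0 \<and> ((t - 1) mod 3 + 3 - (s - 1) mod 3) mod 3 = 1)
      then 1 else 0))"

lemma chk1: "list_all (\<lambda>y. list_all (\<lambda>z. sm y z < 10 \<and> sm y (sm y z) = z \<and> sm (sm z y) y = z
   \<and> ff y z + ff y (sm y z) = ff y y \<and> ff z y + ff (sm z y) y = ff y y \<and> ff y z \<le> 1) [0..<10]) [0..<10]"
  by code_simp

lemma chk2: "list_all (\<lambda>s. list_ex (\<lambda>y. list_ex (\<lambda>z. sm s (sm y z) \<noteq> sm (sm s y) z) [0..<10]) [0..<10]) [1..<10]"
  by code_simp

lemma S_facts:
  assumes "y < 10" "z < 10"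
  shows "sm y z < 10" "sm y (sm y z) = z" "sm (sm z y) y = z"
    "ff y z + ff y (sm y z) = ff y y" "ff z y + ff (sm z y) y = ff y y" "ff y z \<le> 1"
  using chk1 assms by (auto simp: list_all_iff)

lemma S_nonnuc:
  assumes "0 < s" "s < 10"
  shows "\<exists>y<10. \<exists>z<10. sm s (sm y z) \<noteq> sm (sm s y) z"
proof -
  have "s \<in> {Suc 0..<10}" using assms by auto
  then have "\<exists>y\<in>{0..<10}. \<exists>z\<in>{0..<10}. sm s (sm y z) \<noteq> sm (sm s y) z"
    using chk2 by (simp add: list_all_iff list_ex_iff)
  then show ?thesis by (metis atLeastLessThan_iff)
qed

definition enc :: "nat \<Rightarrow> nat \<Rightarrow> nat" where "enc a s = 10 * a + s"

definition mm :: "nat \<Rightarrow> nat \<Rightarrow> nat \<Rightarrow> nat" where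
  "mm n x y = enc ((x div 10 + y div 10 + ff (x mod 10) (y mod 10)) mod n) (sm (x mod 10) (y mod 10))"

lemma enc_div[simp]: "s < 10 \<Longrightarrow> enc a s div 10 = a" by (simp add: enc_def)
lemma enc_mod[simp]: "s < 10 \<Longrightarrow> enc a s mod 10 = s" by (simp add: enc_def)
lemma enc_L: "a < n \<Longrightarrow> s < 10 \<Longrightarrow> enc a s < 10 * n" by (simp add: enc_def)
lemma enc_inj: "s < 10 \<Longrightarrow> t < 10 \<Longrightarrow> enc a s = enc b t \<longleftrightarrow> a = b \<and> s = t"
  by (metis enc_div enc_mod)
lemma dec: "x = enc (x div 10) (x mod 10)" by (simp add: enc_def)
lemma dec_L: "(x::nat) < 10 * n \<Longrightarrow> x div 10 < n" by auto

lemma mod_solve: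
  fixes n a f b :: nat
  assumes "f < n" "b < n"
  shows "\<exists>!c. c < n \<and> (a + c + f) mod n = b"
proof
  let ?c = "(b + (n - (a + f) mod n)) mod n"
  have n0: "n > 0" using assms by auto
  have "(a + ?c + f) mod n = (a + f + ?c) mod n" by (simp add: ac_simps)
  also have "... = (a + f + (b + (n - (a + f) mod n))) mod n" by (rule mod_add_right_eq)
  also have "... = ((a + f) mod n + (b + (n - (a + f) mod n))) mod n" by (rule mod_add_left_eq[symmetric])
  also have "... = (b + n) mod n"
  proof -
    have "(a + f) mod n \<le> n" using n0 by (simp add: less_imp_le)
    then have "(a + f) mod n + (b + (n - (a + f) mod n)) = b + n" by simp
    then show ?thesis by simp
  qed
  also have "... = b" using assms by simp
  finally show "?c < n \<and> (a + ?c + f) mod n = b" using n0 by simp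
next
  fix c assume c: "c < n \<and> (a + c + f) mod n = b"
  let ?c = "(b + (n - (a + f) mod n)) mod n"
  have n0: "n > 0" using assms by auto
  have "?c = ((a + c + f) mod n + (n - (a + f) mod n)) mod n" using c by simp
  also have "... = ((a + c + f) + (n - (a + f) mod n)) mod n"
    by (rule mod_add_left_eq)
  also have "... = (c + ((a + f) + (n - (a + f) mod n))) mod n"
    by (simp add: ac_simps)
  also have "... = (c + ((a + f) mod n + (n - (a + f) mod n))) mod n"
    by (metis mod_add_left_eq mod_add_right_eq)
  also have "... = (c + n) mod n"
  proof -
    have "(a + f) mod n \<le> n" using n0 by (simp add: less_imp_le)
    then have "(a + f) mod n + (n - (a + f) mod n) = n" by simp
    then show ?thesis by simp
  qed
  also have "... = c" using c by simp
  finally show "c = ?c" by simp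
qed

lemma mm_div[simp]: "mm n x y div 10 = (x div 10 + y div 10 + ff (x mod 10) (y mod 10)) mod n"
  unfolding mm_def by (simp add: S_facts)
lemma mm_mod[simp]: "mm n x y mod 10 = sm (x mod 10) (y mod 10)"
  unfolding mm_def by (simp add: S_facts)
lemma eq_dm: "(x::nat) = y \<longleftrightarrow> x div 10 = y div 10 \<and> x mod 10 = y mod 10"
  by (metis dec)
lemma sm0[simp]: "sm 0 t = t" "sm t 0 = t" by (simp_all add: sm_def)
lemma ff0[simp]: "ff 0 t = 0" "ff t 0 = 0" by (simp_all add: ff_def)

lemma mm_L: "0 < n \<Longrightarrow> mm n x y < 10 * n"
  unfolding mm_def by (rule enc_L) (simp_all add: S_facts)

lemma mA: "((a::nat) + b mod n + c) mod n = (a + b + c) mod n"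
  by (metis mod_add_left_eq mod_add_right_eq)

lemma mC: "((a::nat) mod n + b + c) mod n = (a + b + c) mod n"
  by (metis mod_add_left_eq)

lemma C_law:
  assumes "x < 10 * n" "y < 10 * n" "z < 10 * n"
  shows "mm n x (mm n y (mm n y z)) = mm n (mm n (mm n x y) y) z"
proof -
  let ?sx = "x mod 10" and ?sy = "y mod 10" and ?sz = "z mod 10"
  have s: "?sx < 10" "?sy < 10" "?sz < 10" by auto
  have h1: "ff ?sy ?sz + ff ?sy (sm ?sy ?sz) = ff ?sy ?sy" using s S_facts by auto
  have h2: "ff ?sx ?sy + ff (sm ?sx ?sy) ?sy = ff ?sy ?sy" using s S_facts by auto
  have h3: "sm ?sy (sm ?sy ?sz) = ?sz" using s S_facts by auto
  have h4: "sm (sm ?sx ?sy) ?sy = ?sx" using s S_facts by auto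
  have "mm n x (mm n y (mm n y z)) div 10 = (x div 10 + (y div 10 + (y div 10 + z div 10 + ff ?sy ?sz) + ff ?sy (sm ?sy ?sz)) + ff ?sx ?sz) mod n"
    using h3 by (simp add: mA)
  also have "... = (x div 10 + 2 * (y div 10) + z div 10 + ff ?sy ?sy + ff ?sx ?sz) mod n"
    using h1 by (intro arg_cong[where f="\<lambda>t. t mod n"]) linarith
  finally have 1: "mm n x (mm n y (mm n y z)) div 10 = (x div 10 + 2 * (y div 10) + z div 10 + ff ?sy ?sy + ff ?sx ?sz) mod n" .
  have "mm n (mm n (mm n x y) y) z div 10 = ((x div 10 + y div 10 + ff ?sx ?sy) + y div 10 + ff (sm ?sx ?sy) ?sy + z div 10 + ff ?sx ?sz) mod n"
    using h4 by (simp add: mC)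
  also have "... = (x div 10 + 2 * (y div 10) + z div 10 + ff ?sy ?sy + ff ?sx ?sz) mod n"
    using h2 by (intro arg_cong[where f="\<lambda>t. t mod n"]) linarith
  finally have 2: "mm n (mm n (mm n x y) y) z div 10 = (x div 10 + 2 * (y div 10) + z div 10 + ff ?sy ?sy + ff ?sx ?sz) mod n" .
  note 1 2
  moreover have "mm n x (mm n y (mm n y z)) mod 10 = mm n (mm n (mm n x y) y) z mod 10"
    using h3 h4 by simp
  ultimately show ?thesis by (metis eq_dm)
qed

lemma mm_id: "x < 10 * n \<Longrightarrow> mm n 0 x = x \<and> mm n x 0 = x"
  by (simp add: eq_dm[of "mm n 0 x" x] eq_dm[of "mm n x 0" x])

lemma ldiv:
  assumes n: "1 < n" and a: "a < 10 * n" and b: "b < 10 * n"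
  shows "\<exists>!x. x \<in> {x. x < 10 * n} \<and> mm n a x = b"
proof -
  let ?sa = "a mod 10" and ?sb = "b mod 10"
  let ?t = "sm ?sa ?sb"
  have t: "?t < 10" by (simp add: S_facts)
  have f: "ff ?sa ?t < n" using S_facts(6)[of ?sa ?t] t n by simp
  have Ab: "b div 10 < n" using b by auto
  from mod_solve[OF f Ab, of "a div 10"] obtain c where
    c: "c < n" "(a div 10 + c + ff ?sa ?t) mod n = b div 10"
    and cu: "\<And>c'. c' < n \<Longrightarrow> (a div 10 + c' + ff ?sa ?t) mod n = b div 10 \<Longrightarrow> c' = c"
    by blast
  show ?thesis
  proof
    show "enc c ?t \<in> {x. x < 10 * n} \<and> mm n a (enc c ?t) = b"
      using c t enc_L[OF c(1) t] by (simp add: eq_dm[of _ b] S_facts)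
  next
    fix x assume x: "x \<in> {x. x < 10 * n} \<and> mm n a x = b"
    have "sm ?sa (x mod 10) = ?sb" using x mm_mod by metis
    then have sx: "x mod 10 = ?t" using S_facts(2)[of ?sa "x mod 10"] by simp
    have "(a div 10 + x div 10 + ff ?sa ?t) mod n = b div 10" using x mm_div sx by metis
    moreover have "x div 10 < n" using x by auto
    ultimately have "x div 10 = c" using cu by blast
    then show "x = enc c ?t" using sx dec by metis
  qed
qed

lemma rdiv:
  assumes n: "1 < n" and a: "a < 10 * n" and b: "b < 10 * n"
  shows "\<exists>!x. x \<in> {x. x < 10 * n} \<and> mm n x a = b"
proof -
  let ?sa = "a mod 10" and ?sb = "b mod 10"
  let ?t = "sm ?sb ?sa"
  have t: "?t < 10" by (simp add: S_facts)
  have f: "ff ?t ?sa < n" using S_facts(6)[of ?t ?sa] t n by simp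
  have Ab: "b div 10 < n" using b by auto
  from mod_solve[OF f Ab, of "a div 10"] obtain c where
    c: "c < n" "(a div 10 + c + ff ?t ?sa) mod n = b div 10"
    and cu: "\<And>c'. c' < n \<Longrightarrow> (a div 10 + c' + ff ?t ?sa) mod n = b div 10 \<Longrightarrow> c' = c"
    by blast
  show ?thesis
  proof
    show "enc c ?t \<in> {x. x < 10 * n} \<and> mm n (enc c ?t) a = b"
      using c t enc_L[OF c(1) t] by (simp add: eq_dm[of _ b] S_facts ac_simps)
  next
    fix x assume x: "x \<in> {x. x < 10 * n} \<and> mm n x a = b"
    have "sm (x mod 10) ?sa = ?sb" using x mm_mod by metis
    then have sx: "x mod 10 = ?t" using S_facts(3)[of ?sa "x mod 10"] by simp
    have "(x div 10 + a div 10 + ff ?t ?sa) mod n = b div 10" using x mm_div sx by metis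
    then have "(a div 10 + x div 10 + ff ?t ?sa) mod n = b div 10" by (simp add: ac_simps)
    moreover have "x div 10 < n" using x by auto
    ultimately have "x div 10 = c" using cu by blast
    then show "x = enc c ?t" using sx dec by metis
  qed
qed

lemma is_C: "1 < n \<Longrightarrow> is_C_loop {x. x < 10 * n} (mm n) 0"
  unfolding is_C_loop_def is_loop_def
  using mm_L mm_id ldiv rdiv C_law by auto

lemma nuc: assumes n: "1 < n"
  shows "nucleus {x. x < 10 * n} (mm n) = (\<lambda>a. 10 * a) ` {..<n}"
proof
  show "nucleus {x. x < 10 * n} (mm n) \<subseteq> (\<lambda>a. 10 * a) ` {..<n}"
  proof
    fix x assume x: "x \<in> nucleus {x. x < 10 * n} (mm n)"
    have xm: "x mod 10 = 0"
    proof (rule ccontr)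
      assume "x mod 10 \<noteq> 0"
      then obtain y z where yz: "y < 10" "z < 10" "sm (x mod 10) (sm y z) \<noteq> sm (sm (x mod 10) y) z"
        using S_nonnuc[of "x mod 10"] by auto
      have "y < 10 * n" "z < 10 * n" using yz n by auto
      then have "mm n x (mm n y z) = mm n (mm n x y) z" using x unfolding nucleus_def by auto
      then have "mm n x (mm n y z) mod 10 = mm n (mm n x y) z mod 10" by simp
      then show False using yz by simp
    qed
    have "x < 10 * n" using x unfolding nucleus_def by auto
    then have "x div 10 < n" by auto
    moreover have "x = 10 * (x div 10)" using xm by (metis dec enc_def add_0_right)
    ultimately show "x \<in> (\<lambda>a. 10 * a) ` {..<n}" by blast
  qed
next
  show "(\<lambda>a. 10 * a) ` {..<n} \<subseteq> nucleus {x. x < 10 * n} (mm n)"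
  proof
    fix x assume "x \<in> (\<lambda>a. 10 * a) ` {..<n}"
    then obtain a where a: "a < n" "x = 10 * a" by auto
    have xd: "x div 10 = a" "x mod 10 = 0" using a by auto
    show "x \<in> nucleus {x. x < 10 * n} (mm n)"
      unfolding nucleus_def
    proof (intro CollectI conjI ballI)
      show "x < 10 * n" using a by auto
    next
      fix y z
      show "mm n x (mm n y z) = mm n (mm n x y) z"
        by (simp add: eq_dm[of "mm n x _"] xd mA mC mod_simps; simp add: ac_simps)
      show "mm n y (mm n x z) = mm n (mm n y x) z"
        by (simp add: eq_dm[of "mm n y _"] xd mA mC mod_simps; simp add: ac_simps)
      show "mm n y (mm n z x) = mm n (mm n y z) x"
        by (simp add: eq_dm[of "mm n y _"] xd mA mC mod_simps; simp add: ac_simps)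
    qed
  qed
qed

theorem corollary3p4:
  fixes n :: nat
  assumes "n > 1"
  shows "\<exists>(L :: nat set) m e. is_C_loop L m e \<and> \<not> associative_on L m \<and>
           \<not> commutative_on L m \<and> finite (nucleus L m) \<and> card (nucleus L m) = n"
proof (intro exI conjI)
  show "is_C_loop {x. x < 10 * n} (mm n) 0" using is_C assms .
  show "\<not> associative_on {x. x < 10 * n} (mm n)"
  proof
    assume A: "associative_on {x. x < 10 * n} (mm n)"
    obtain y z where yz: "y < 10" "z < 10" "sm 1 (sm y z) \<noteq> sm (sm 1 y) z"
      using S_nonnuc[of 1] by auto
    have "mm n 1 (mm n y z) = mm n (mm n 1 y) z" using A yz assms unfolding associative_on_def by auto
    then have "mm n 1 (mm n y z) mod 10 = mm n (mm n 1 y) z mod 10" by simp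
    then show False using yz by simp
  qed
  show "\<not> commutative_on {x. x < 10 * n} (mm n)"
  proof
    assume A: "commutative_on {x. x < 10 * n} (mm n)"
    have "mm n 1 2 = mm n 2 1" using A assms unfolding commutative_on_def by auto
    then have "mm n 1 2 div 10 = mm n 2 1 div 10" by simp
    moreover have "ff 1 2 = 1" "ff 2 1 = 0" by (simp_all add: ff_def)
    ultimately show False using assms by simp
  qed
  show "finite (nucleus {x. x < 10 * n} (mm n))" using nuc[OF assms] by simp
  show "card (nucleus {x. x < 10 * n} (mm n)) = n" using nuc[OF assms]
    by (simp add: card_image inj_on_def)
qed

end
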